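(* Let $(A,\mu,\alpha,\beta)$ be a BiHom-associative algebra (with $\mu(a\otimes b)=a\cdot b$) and let $r=\sum_i x_i\otimes y_i\in A\otimes A$ be such that $(\alpha\otimes\alpha)(r)=r=(\beta\otimes\beta)(r)$ and $a\bullet A(r)=A(r)\bullet a$ for all $a\in A$. Define $\Delta_r:A\to A\otimes A$ by $\Delta_r(a)=\sum_i\alpha(x_i)\otimes y_i\cdot a-\sum_i a\cdot x_i\otimes\beta(y_i)$. Then $(A,\mu,\Delta_r,\alpha,\beta,\psi=\beta,\omega=\alpha)$ is an infinitesimal BiHom-bialgebra.
   Context: Work over a field. A BiHom-associative algebra is a 4-tuple $(A,\mu,\alpha,\beta)$ with $\alpha,\beta$ commuting linear maps, multiplicative for $\mu$, and $\alpha(x)\cdot(y\cdot z)=(x\cdot y)\cdot\beta(z)$. Actions of $A$ on $A\otimes A\otimes A$: $a\bullet(x\otimes y\otimes z)=\alpha(a)\cdot x\otimes\beta(y)\otimes\beta(z)$ and $(x\otimes y\otimes z)\bullet a=\alpha(x)\otimes\alpha(y)\otimes z\cdot\beta(a)$. With $r=\sum_i x_i\otimes y_i$: $r_{12}r_{23}=\sum_{i,j}\alpha(x_i)\otimes y_i\cdot x_j\otimes\beta(y_j)$, $r_{13}r_{12}=\sum_{i,j}x_i\cdot x_j\otimes\beta(y_j)\otimes\beta(y_i)$, $r_{23}r_{13}=\sum_{i,j}\alpha(x_i)\otimes\alpha(x_j)\otimes y_j\cdot y_i$, $A(r)=r_{13}r_{12}-r_{12}r_{23}+r_{23}r_{13}$.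 A BiHom-coassociative coalgebra is $(C,\Delta,\psi,\omega)$ with $\psi\omega=\omega\psi$, $(\psi\otimes\psi)\Delta=\Delta\psi$, $(\omega\otimes\omega)\Delta=\Delta\omega$ and $(\Delta\otimes\psi)\Delta=(\omega\otimes\Delta)\Delta$. An infinitesimal BiHom-bialgebra is a 7-tuple $(A,\mu,\Delta,\alpha,\beta,\psi,\omega)$ such that $(A,\mu,\alpha,\beta)$ is BiHom-associative, $(A,\Delta,\psi,\omega)$ is BiHom-coassociative, and for all $a,b$ (with $\Delta(a)=a_1\otimes a_2$): $\Delta(a\cdot b)=\omega(a)\cdot b_1\otimes\beta(b_2)+\alpha(a_1)\otimes a_2\cdot\psi(b)$; $\alpha\psi=\psi\alpha$, $\alpha\omega=\omega\alpha$, $\beta\psi=\psi\beta$, $\beta\omega=\omega\beta$; $(\alpha\otimes\alpha)\Delta=\Delta\alpha$, $(\beta\otimes\beta)\Delta=\Delta\beta$; $\psi,\omega$ multiplicative for $\mu$. *)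

theory Defs
  imports Complex_Main
begin

text \<open>
  Elements of A \<otimes> A (resp. A \<otimes> A \<otimes> A) are represented by finite formal sums of simple
  tensors, i.e. lists of pairs (resp. triples).  Two such formal sums denote the same tensor
  iff every bilinear (resp. trilinear) form with values in the field 'k takes the same value
  on them (over a field, linear functionals on A \<otimes> A are exactly the bilinear forms, and they
  separate points of A \<otimes> A).
\<close>

type_synonym 'a tensor2 = "('a \<times> 'a) list"
type_synonym 'a tensor3 = "('a \<times> 'a \<times> 'a) list"

definition lin :: "('k::field \<Rightarrow> 'a::ab_group_add \<Rightarrow> 'a) \<Rightarrow> ('a \<Rightarrow> 'a) \<Rightarrow> bool" where
  "lin sc f \<longleftrightarrow> Vector_Spaces.linear sc sc f"

definition bilinear_form :: "('k::field \<Rightarrow> 'a::ab_group_add \<Rightarrow> 'a) \<Rightarrow> ('a \<Rightarrow> 'a \<Rightarrow> 'k) \<Rightarrow> bool" where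
  "bilinear_form sc \<phi> \<longleftrightarrow>
     (\<forall>x. Vector_Spaces.linear sc (*) (\<phi> x)) \<and> (\<forall>y. Vector_Spaces.linear sc (*) (\<lambda>x. \<phi> x y))"

definition trilinear_form :: "('k::field \<Rightarrow> 'a::ab_group_add \<Rightarrow> 'a) \<Rightarrow> ('a \<Rightarrow> 'a \<Rightarrow> 'a \<Rightarrow> 'k) \<Rightarrow> bool" where
  "trilinear_form sc \<phi> \<longleftrightarrow>
     (\<forall>y z. Vector_Spaces.linear sc (*) (\<lambda>x. \<phi> x y z)) \<and>
     (\<forall>x z. Vector_Spaces.linear sc (*) (\<lambda>y. \<phi> x y z)) \<and>
     (\<forall>x y. Vector_Spaces.linear sc (*) (\<lambda>z. \<phi> x y z))"

definition teq2 :: "('k::field \<Rightarrow> 'a::ab_group_add \<Rightarrow> 'a) \<Rightarrow> 'a tensor2 \<Rightarrow> 'a tensor2 \<Rightarrow> bool" where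
  "teq2 sc s t \<longleftrightarrow> (\<forall>\<phi>. bilinear_form sc \<phi> \<longrightarrow>
     (\<Sum>(x,y)\<leftarrow>s. \<phi> x y) = (\<Sum>(x,y)\<leftarrow>t. \<phi> x y))"

definition teq3 :: "('k::field \<Rightarrow> 'a::ab_group_add \<Rightarrow> 'a) \<Rightarrow> 'a tensor3 \<Rightarrow> 'a tensor3 \<Rightarrow> bool" where
  "teq3 sc s t \<longleftrightarrow> (\<forall>\<phi>. trilinear_form sc \<phi> \<longrightarrow>
     (\<Sum>(x,y,z)\<leftarrow>s. \<phi> x y z) = (\<Sum>(x,y,z)\<leftarrow>t. \<phi> x y z))"

definition bihom_assoc_algebra ::
  "('k::field \<Rightarrow> 'a::ab_group_add \<Rightarrow> 'a) \<Rightarrow> ('a \<Rightarrow> 'a \<Rightarrow> 'a) \<Rightarrow> ('a \<Rightarrow> 'a) \<Rightarrow> ('a \<Rightarrow> 'a) \<Rightarrow> bool" where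
  "bihom_assoc_algebra sc mu al be \<longleftrightarrow>
     vector_space sc \<and>
     (\<forall>x. lin sc (mu x)) \<and> (\<forall>y. lin sc (\<lambda>x. mu x y)) \<and>
     lin sc al \<and> lin sc be \<and>
     (\<forall>x. al (be x) = be (al x)) \<and>
     (\<forall>x y. al (mu x y) = mu (al x) (al y)) \<and>
     (\<forall>x y. be (mu x y) = mu (be x) (be y)) \<and>
     (\<forall>x y z. mu (al x) (mu y z) = mu (mu x y) (be z))"

definition bihom_coassoc_coalgebra ::
  "('k::field \<Rightarrow> 'a::ab_group_add \<Rightarrow> 'a) \<Rightarrow> ('a \<Rightarrow> 'a tensor2) \<Rightarrow> ('a \<Rightarrow> 'a) \<Rightarrow> ('a \<Rightarrow> 'a) \<Rightarrow> bool" where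
  "bihom_coassoc_coalgebra sc De psi om \<longleftrightarrow>
     vector_space sc \<and>
     (\<forall>c a b. teq2 sc (De (sc c a + b)) ([(sc c x, y). (x,y) \<leftarrow> De a] @ De b)) \<and>
     lin sc psi \<and> lin sc om \<and>
     (\<forall>x. psi (om x) = om (psi x)) \<and>
     (\<forall>a. teq2 sc [(psi x, psi y). (x,y) \<leftarrow> De a] (De (psi a))) \<and>
     (\<forall>a. teq2 sc [(om x, om y). (x,y) \<leftarrow> De a] (De (om a))) \<and>
     (\<forall>a. teq3 sc [(u, v, psi y). (x,y) \<leftarrow> De a, (u,v) \<leftarrow> De x]
                  [(om x, u, v). (x,y) \<leftarrow> De a, (u,v) \<leftarrow> De y])"

definition inf_bihom_bialgebra ::
  "('k::field \<Rightarrow> 'a::ab_group_add \<Rightarrow> 'a) \<Rightarrow> ('a \<Rightarrow> 'a \<Rightarrow> 'a) \<Rightarrow> ('a \<Rightarrow> 'a tensor2) \<Rightarrow>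
   ('a \<Rightarrow> 'a) \<Rightarrow> ('a \<Rightarrow> 'a) \<Rightarrow> ('a \<Rightarrow> 'a) \<Rightarrow> ('a \<Rightarrow> 'a) \<Rightarrow> bool" where
  "inf_bihom_bialgebra sc mu De al be psi om \<longleftrightarrow>
     bihom_assoc_algebra sc mu al be \<and>
     bihom_coassoc_coalgebra sc De psi om \<and>
     (\<forall>a b. teq2 sc (De (mu a b))
        ([(mu (om a) b1, be b2). (b1,b2) \<leftarrow> De b] @ [(al a1, mu a2 (psi b)). (a1,a2) \<leftarrow> De a])) \<and>
     (\<forall>x. al (psi x) = psi (al x)) \<and> (\<forall>x. al (om x) = om (al x)) \<and>
     (\<forall>x. be (psi x) = psi (be x)) \<and> (\<forall>x. be (om x) = om (be x)) \<and>
     (\<forall>a. teq2 sc [(al x, al y). (x,y) \<leftarrow> De a] (De (al a))) \<and>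
     (\<forall>a. teq2 sc [(be x, be y). (x,y) \<leftarrow> De a] (De (be a))) \<and>
     (\<forall>x y. psi (mu x y) = mu (psi x) (psi y)) \<and>
     (\<forall>x y. om (mu x y) = mu (om x) (om y))"

text \<open>The tensor A(r) = r13 r12 - r12 r23 + r23 r13 for r = sum_i x_i \<otimes> y_i.\<close>

definition r12r23 :: "('a \<Rightarrow> 'a \<Rightarrow> 'a) \<Rightarrow> ('a \<Rightarrow> 'a) \<Rightarrow> ('a \<Rightarrow> 'a) \<Rightarrow> 'a tensor2 \<Rightarrow> 'a tensor3" where
  "r12r23 mu al be r = [(al xi, mu yi xj, be yj). (xi,yi) \<leftarrow> r, (xj,yj) \<leftarrow> r]"

definition r13r12 :: "('a \<Rightarrow> 'a \<Rightarrow> 'a) \<Rightarrow> ('a \<Rightarrow> 'a) \<Rightarrow> ('a \<Rightarrow> 'a) \<Rightarrow> 'a tensor2 \<Rightarrow> 'a tensor3" where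
  "r13r12 mu al be r = [(mu xi xj, be yj, be yi). (xi,yi) \<leftarrow> r, (xj,yj) \<leftarrow> r]"

definition r23r13 :: "('a \<Rightarrow> 'a \<Rightarrow> 'a) \<Rightarrow> ('a \<Rightarrow> 'a) \<Rightarrow> ('a \<Rightarrow> 'a) \<Rightarrow> 'a tensor2 \<Rightarrow> 'a tensor3" where
  "r23r13 mu al be r = [(al xi, al xj, mu yj yi). (xi,yi) \<leftarrow> r, (xj,yj) \<leftarrow> r]"

definition AYBE :: "('a::ab_group_add \<Rightarrow> 'a \<Rightarrow> 'a) \<Rightarrow> ('a \<Rightarrow> 'a) \<Rightarrow> ('a \<Rightarrow> 'a) \<Rightarrow> 'a tensor2 \<Rightarrow> 'a tensor3" where
  "AYBE mu al be r = r13r12 mu al be r @ [(- x, y, z). (x,y,z) \<leftarrow> r12r23 mu al be r]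
                     @ r23r13 mu al be r"

definition act_left :: "('a \<Rightarrow> 'a \<Rightarrow> 'a) \<Rightarrow> ('a \<Rightarrow> 'a) \<Rightarrow> ('a \<Rightarrow> 'a) \<Rightarrow> 'a \<Rightarrow> 'a tensor3 \<Rightarrow> 'a tensor3" where
  "act_left mu al be a t = [(mu (al a) x, be y, be z). (x,y,z) \<leftarrow> t]"

definition act_right :: "('a \<Rightarrow> 'a \<Rightarrow> 'a) \<Rightarrow> ('a \<Rightarrow> 'a) \<Rightarrow> ('a \<Rightarrow> 'a) \<Rightarrow> 'a tensor3 \<Rightarrow> 'a \<Rightarrow> 'a tensor3" where
  "act_right mu al be t a = [(al x, al y, mu z (be a)). (x,y,z) \<leftarrow> t]"

definition Delta_r :: "('a::ab_group_add \<Rightarrow> 'a \<Rightarrow> 'a) \<Rightarrow> ('a \<Rightarrow> 'a) \<Rightarrow> ('a \<Rightarrow> 'a) \<Rightarrow> 'a tensor2 \<Rightarrow> 'a \<Rightarrow> 'a tensor2" where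
  "Delta_r mu al be r a = [(al x, mu y a). (x,y) \<leftarrow> r] @ [(- mu a x, be y). (x,y) \<leftarrow> r]"

end

theory Submission
  imports Defs
begin

lemma vs_field: "vector_space ((*) :: 'k::field \<Rightarrow> 'k \<Rightarrow> 'k)"
  by (simp add: vector_space_def algebra_simps)

lemma add_neg_gen:
  fixes f :: "'b::ab_group_add \<Rightarrow> 'c::ab_group_add"
  assumes "\<And>x y. f (x + y) = f x + f y" shows "f (- x) = - f x"
proof -
  have "f 0 = 0" using assms[of 0 0] by simp
  moreover have "f (x + - x) = f x + f (- x)" by (rule assms)
  ultimately show ?thesis by (simp add: eq_neg_iff_add_eq_0 add.commute)
qed

lemma linD:
  assumes "Vector_Spaces.linear s1 s2 f"
  shows "f (x + y) = f x + f y" "f (s1 c x) = s2 c (f x)" "f (- x) = - f x"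
proof -
  show a: "\<And>x y. f (x + y) = f x + f y" using assms unfolding Vector_Spaces.linear_iff by auto
  show "f (s1 c x) = s2 c (f x)" using assms unfolding Vector_Spaces.linear_iff by auto
  show "f (- x) = - f x" by (rule add_neg_gen) (rule a)
qed

lemma bilD:
  assumes "bilinear_form sc \<phi>"
  shows "\<phi> (x + y) z = \<phi> x z + \<phi> y z" "\<phi> x (y + z) = \<phi> x y + \<phi> x z"
    "\<phi> (sc c x) y = c * \<phi> x y" "\<phi> x (sc c y) = c * \<phi> x y"
    "\<phi> (- x) y = - \<phi> x y" "\<phi> x (- y) = - \<phi> x y"
  using assms unfolding bilinear_form_def
  by (auto dest: linD[where f="\<lambda>x. \<phi> x y" for y] linD[where f="\<phi> x" for x])

lemma bilD_diff:
  assumes "bilinear_form sc \<phi>"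
  shows "\<phi> (x - x') y = \<phi> x y - \<phi> x' y" "\<phi> x (y - y') = \<phi> x y - \<phi> x y'"
  by (simp only: diff_conv_add_uminus bilD[OF assms])+

lemma bilI:
  assumes "vector_space sc"
    "\<And>x y z. \<phi> (x + y) z = \<phi> x z + \<phi> y z" "\<And>x y z. \<phi> x (y + z) = \<phi> x y + \<phi> x z"
    "\<And>c x y. \<phi> (sc c x) y = c * \<phi> x y" "\<And>c x y. \<phi> x (sc c y) = c * \<phi> x y"
  shows "bilinear_form sc \<phi>"
  using assms vs_field unfolding bilinear_form_def Vector_Spaces.linear_iff by auto

lemma triD:
  assumes "trilinear_form sc \<phi>"
  shows "\<phi> (x + x') y z = \<phi> x y z + \<phi> x' y z" "\<phi> x (y + y') z = \<phi> x y z + \<phi> x y' z"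
    "\<phi> x y (z + z') = \<phi> x y z + \<phi> x y z'"
    "\<phi> (sc c x) y z = c * \<phi> x y z" "\<phi> x (sc c y) z = c * \<phi> x y z" "\<phi> x y (sc c z) = c * \<phi> x y z"
    "\<phi> (- x) y z = - \<phi> x y z" "\<phi> x (- y) z = - \<phi> x y z" "\<phi> x y (- z) = - \<phi> x y z"
proof -
  have l1: "Vector_Spaces.linear sc (*) (\<lambda>x. \<phi> x y z)" for y z using assms by (simp add: trilinear_form_def)
  have l2: "Vector_Spaces.linear sc (*) (\<lambda>y. \<phi> x y z)" for x z using assms by (simp add: trilinear_form_def)
  have l3: "Vector_Spaces.linear sc (*) (\<lambda>z. \<phi> x y z)" for x y using assms by (simp add: trilinear_form_def)
  show "\<phi> (x + x') y z = \<phi> x y z + \<phi> x' y z" "\<phi> (sc c x) y z = c * \<phi> x y z" "\<phi> (- x) y z = - \<phi> x y z"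
    using linD[OF l1[of y z]] by auto
  show "\<phi> x (y + y') z = \<phi> x y z + \<phi> x y' z" "\<phi> x (sc c y) z = c * \<phi> x y z" "\<phi> x (- y) z = - \<phi> x y z"
    using linD[OF l2[of x z]] by auto
  show "\<phi> x y (z + z') = \<phi> x y z + \<phi> x y z'" "\<phi> x y (sc c z) = c * \<phi> x y z" "\<phi> x y (- z) = - \<phi> x y z"
    using linD[OF l3[of x y]] by auto
qed

lemma triI:
  assumes "vector_space sc"
    "\<And>x x' y z. \<phi> (x + x') y z = \<phi> x y z + \<phi> x' y z" "\<And>x y y' z. \<phi> x (y + y') z = \<phi> x y z + \<phi> x y' z"
    "\<And>x y z z'. \<phi> x y (z + z') = \<phi> x y z + \<phi> x y z'"
    "\<And>c x y z. \<phi> (sc c x) y z = c * \<phi> x y z" "\<And>c x y z. \<phi> x (sc c y) z = c * \<phi> x y z"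
    "\<And>c x y z. \<phi> x y (sc c z) = c * \<phi> x y z"
  shows "trilinear_form sc \<phi>"
  using assms vs_field unfolding trilinear_form_def Vector_Spaces.linear_iff by auto

lemma sum_list_concat_map: "sum_list (map f (concat L)) = (\<Sum>l\<leftarrow>L. sum_list (map f l))"
  by (induction L) auto

lemma sum_list_negf: "(\<Sum>x\<leftarrow>xs. - f x) = - (\<Sum>x\<leftarrow>xs. (f x :: 'c::ab_group_add))"
  by (induction xs) auto

lemma sum_list_swap: "(\<Sum>x\<leftarrow>xs. \<Sum>y\<leftarrow>ys. f x y) = (\<Sum>y\<leftarrow>ys. \<Sum>x\<leftarrow>xs. (f x y :: 'c::comm_monoid_add))"
proof (induction xs)
  case (Cons a xs)
  have "(\<Sum>x\<leftarrow>a#xs. \<Sum>y\<leftarrow>ys. f x y) = (\<Sum>y\<leftarrow>ys. f a y) + (\<Sum>y\<leftarrow>ys. \<Sum>x\<leftarrow>xs. f x y)"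
    using Cons by simp
  also have "\<dots> = (\<Sum>y\<leftarrow>ys. f a y + (\<Sum>x\<leftarrow>xs. f x y))" by (rule sum_list_addf[symmetric])
  finally show ?case by simp
qed simp

locale BH =
  fixes sc :: "'k::field \<Rightarrow> 'a::ab_group_add \<Rightarrow> 'a" and mu :: "'a \<Rightarrow> 'a \<Rightarrow> 'a"
    and al be :: "'a \<Rightarrow> 'a" and r :: "'a tensor2"
  assumes alg: "bihom_assoc_algebra sc mu al be"
    and ral: "teq2 sc [(al x, al y). (x,y) \<leftarrow> r] r"
    and rbe: "teq2 sc [(be x, be y). (x,y) \<leftarrow> r] r"
    and ybe: "\<And>a. teq3 sc (act_left mu al be a (AYBE mu al be r)) (act_right mu al be (AYBE mu al be r) a)"
begin

lemma vs: "vector_space sc" using alg by (simp add: bihom_assoc_algebra_def)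

lemma lins: "Vector_Spaces.linear sc sc (mu x)" "Vector_Spaces.linear sc sc (\<lambda>y. mu y x)"
  "Vector_Spaces.linear sc sc al" "Vector_Spaces.linear sc sc be"
  using alg by (simp_all add: bihom_assoc_algebra_def lin_def)

lemma mu_simps[simp]:
  "mu (x + y) z = mu x z + mu y z" "mu x (y + z) = mu x y + mu x z"
  "mu (sc c x) y = sc c (mu x y)" "mu x (sc c y) = sc c (mu x y)"
  "mu (- x) y = - mu x y" "mu x (- y) = - mu x y"
  using linD[OF lins(1)] linD[OF lins(2)] by auto

lemma al_simps[simp]: "al (x + y) = al x + al y" "al (sc c x) = sc c (al x)" "al (- x) = - al x"
  using linD[OF lins(3)] by auto
lemma be_simps[simp]: "be (x + y) = be x + be y" "be (sc c x) = sc c (be x)" "be (- x) = - be x"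
  using linD[OF lins(4)] by auto

lemma comm[simp]: "al (be x) = be (al x)" using alg by (simp add: bihom_assoc_algebra_def)
lemma al_mu[simp]: "al (mu x y) = mu (al x) (al y)" using alg by (simp add: bihom_assoc_algebra_def)
lemma be_mu[simp]: "be (mu x y) = mu (be x) (be y)" using alg by (simp add: bihom_assoc_algebra_def)
lemma assoc: "mu (al x) (mu y z) = mu (mu x y) (be z)" using alg by (simp add: bihom_assoc_algebra_def)

lemma inv_al: "bilinear_form sc \<psi> \<Longrightarrow> (\<Sum>(x,y)\<leftarrow>r. \<psi> (al x) (al y)) = (\<Sum>(x,y)\<leftarrow>r. \<psi> x y)"
  using ral unfolding teq2_def by (auto simp: comp_def case_prod_unfold)
lemma inv_be: "bilinear_form sc \<psi> \<Longrightarrow> (\<Sum>(x,y)\<leftarrow>r. \<psi> (be x) (be y)) = (\<Sum>(x,y)\<leftarrow>r. \<psi> x y)"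
  using rbe unfolding teq2_def by (auto simp: comp_def case_prod_unfold)

lemma inv_al': "bilinear_form sc \<psi> \<Longrightarrow> (\<Sum>q\<leftarrow>r. \<psi> (al (fst q)) (al (snd q))) = (\<Sum>q\<leftarrow>r. \<psi> (fst q) (snd q))"
  using inv_al by (simp add: case_prod_unfold)
lemma inv_be': "bilinear_form sc \<psi> \<Longrightarrow> (\<Sum>q\<leftarrow>r. \<psi> (be (fst q)) (be (snd q))) = (\<Sum>q\<leftarrow>r. \<psi> (fst q) (snd q))"
  using inv_be by (simp add: case_prod_unfold)
lemma inv_al_in: "(\<And>p. bilinear_form sc (C p)) \<Longrightarrow>
  (\<Sum>p\<leftarrow>L. \<Sum>q\<leftarrow>r. C p (al (fst q)) (al (snd q))) = (\<Sum>p\<leftarrow>L. \<Sum>q\<leftarrow>r. C p (fst q) (snd q))"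
  by (rule arg_cong[where f=sum_list], rule map_cong) (auto simp: inv_al')
lemma inv_be_in: "(\<And>p. bilinear_form sc (C p)) \<Longrightarrow>
  (\<Sum>p\<leftarrow>L. \<Sum>q\<leftarrow>r. C p (be (fst q)) (be (snd q))) = (\<Sum>p\<leftarrow>L. \<Sum>q\<leftarrow>r. C p (fst q) (snd q))"
  by (rule arg_cong[where f=sum_list], rule map_cong) (auto simp: inv_be')

lemma ybe': "trilinear_form sc \<phi> \<Longrightarrow> 
   (\<Sum>(x,y,z)\<leftarrow>AYBE mu al be r. \<phi> (mu (al a) x) (be y) (be z)) = (\<Sum>(x,y,z)\<leftarrow>AYBE mu al be r. \<phi> (al x) (al y) (mu z (be a)))"
  using ybe[of a] unfolding teq3_def act_left_def act_right_def by (auto simp: comp_def case_prod_unfold)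

end

locale BHT = BH + fixes \<phi> :: "'a::ab_group_add \<Rightarrow> 'a \<Rightarrow> 'a \<Rightarrow> 'k::field" assumes tri: "trilinear_form sc \<phi>"
begin
lemmas phi_simps[simp] = triD[OF tri]

lemma comb: "(p13::'c::ab_group_add) + (p23 - p12) = q13 + (q23 - q12) \<Longrightarrow> q12 - q13 + (p13 - h2) = q23 - h2 + (p12 - p23)"
  by (simp add: algebra_simps)

lemma coassoc: "(\<Sum>(x,y,z)\<leftarrow>[(u, v, be y). (x,y) \<leftarrow> Delta_r mu al be r a, (u,v) \<leftarrow> Delta_r mu al be r x]. \<phi> x y z) =
  (\<Sum>(x,y,z)\<leftarrow>[(al x, u, v). (x,y) \<leftarrow> Delta_r mu al be r a, (u,v) \<leftarrow> Delta_r mu al be r y]. \<phi> x y z)"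
proof -
  have H: "(\<Sum>p\<leftarrow>r. \<Sum>q\<leftarrow>r. \<phi> (mu (al a) (mu (fst p) (fst q))) (be (be (snd q))) (be (be (snd p)))) +
     ((\<Sum>p\<leftarrow>r. \<Sum>q\<leftarrow>r. \<phi> (mu (al a) (al (fst p))) (be (al (fst q))) (mu (be (snd q)) (be (snd p)))) -
      (\<Sum>p\<leftarrow>r. \<Sum>q\<leftarrow>r. \<phi> (mu (al a) (al (fst p))) (mu (be (snd p)) (be (fst q))) (be (be (snd q))))) =
     (\<Sum>p\<leftarrow>r. \<Sum>q\<leftarrow>r. \<phi> (mu (al (fst p)) (al (fst q))) (be (al (snd q))) (mu (be (snd p)) (be a))) +
     ((\<Sum>p\<leftarrow>r. \<Sum>q\<leftarrow>r. \<phi> (al (al (fst p))) (al (al (fst q))) (mu (mu (snd q) (snd p)) (be a))) -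
      (\<Sum>p\<leftarrow>r. \<Sum>q\<leftarrow>r. \<phi> (al (al (fst p))) (mu (al (snd p)) (al (fst q))) (mu (be (snd q)) (be a))))"
    using ybe'[OF tri, of a]
    by (simp add: AYBE_def r12r23_def r13r12_def r23r13_def sum_list_concat_map sum_list_addf sum_list_negf sum_list_subtractf case_prod_unfold comp_def)
  have E1: "(\<Sum>p\<leftarrow>r. \<Sum>q\<leftarrow>r. \<phi> (al (fst q)) (mu (snd q) (al (fst p))) (mu (be (snd p)) (be a)))
     = (\<Sum>p\<leftarrow>r. \<Sum>q\<leftarrow>r. \<phi> (al (al (fst p))) (mu (al (snd p)) (al (fst q))) (mu (be (snd q)) (be a)))"
  proof -
    have b: "bilinear_form sc (\<lambda>x y. \<Sum>q\<leftarrow>r. \<phi> (al x) (mu y (al (fst q))) (mu (be (snd q)) (be a)))"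
      by (rule bilI[OF vs]) (simp_all add: sum_list_addf sum_list_const_mult)
    have "(\<Sum>p\<leftarrow>r. \<Sum>q\<leftarrow>r. \<phi> (al (fst q)) (mu (snd q) (al (fst p))) (mu (be (snd p)) (be a)))
       = (\<Sum>p\<leftarrow>r. \<Sum>q\<leftarrow>r. \<phi> (al (fst p)) (mu (snd p) (al (fst q))) (mu (be (snd q)) (be a)))"
      by (rule sum_list_swap)
    also have "\<dots> = (\<Sum>p\<leftarrow>r. \<Sum>q\<leftarrow>r. \<phi> (al (al (fst p))) (mu (al (snd p)) (al (fst q))) (mu (be (snd q)) (be a)))"
      using inv_al'[OF b] by simp
    finally show ?thesis .
  qed
  have E2: "(\<Sum>p\<leftarrow>r. \<Sum>q\<leftarrow>r. \<phi> (mu (al (fst p)) (fst q)) (be (snd q)) (mu (be (snd p)) (be a)))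
     = (\<Sum>p\<leftarrow>r. \<Sum>q\<leftarrow>r. \<phi> (mu (al (fst p)) (al (fst q))) (be (al (snd q))) (mu (be (snd p)) (be a)))"
    using inv_al_in[where C="\<lambda>p x y. \<phi> (mu (al (fst p)) x) (be y) (mu (be (snd p)) (be a))" and L=r]
    by (simp add: bilI[OF vs])
  have E3: "(\<Sum>p\<leftarrow>r. \<Sum>q\<leftarrow>r. \<phi> (mu (mu a (fst p)) (fst q)) (be (snd q)) (be (be (snd p))))
     = (\<Sum>p\<leftarrow>r. \<Sum>q\<leftarrow>r. \<phi> (mu (al a) (mu (fst p) (fst q))) (be (be (snd q))) (be (be (snd p))))"
    using inv_be_in[where C="\<lambda>p x y. \<phi> (mu (mu a (fst p)) x) (be y) (be (be (snd p)))" and L=r]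
    by (simp add: bilI[OF vs] assoc)
  have E4: "(\<Sum>p\<leftarrow>r. \<Sum>q\<leftarrow>r. \<phi> (mu (al a) (al (fst p))) (al (fst q)) (mu (snd q) (be (snd p))))
     = (\<Sum>p\<leftarrow>r. \<Sum>q\<leftarrow>r. \<phi> (mu (al a) (al (fst p))) (be (al (fst q))) (mu (be (snd q)) (be (snd p))))"
    using inv_be_in[where C="\<lambda>p x y. \<phi> (mu (al a) (al (fst p))) (al x) (mu y (be (snd p)))" and L=r]
    by (simp add: bilI[OF vs])
  have E5: "(\<Sum>p\<leftarrow>r. \<Sum>q\<leftarrow>r. \<phi> (mu (al a) (al (fst p))) (mu (be (snd p)) (fst q)) (be (snd q)))
     = (\<Sum>p\<leftarrow>r. \<Sum>q\<leftarrow>r. \<phi> (mu (al a) (al (fst p))) (mu (be (snd p)) (be (fst q))) (be (be (snd q))))"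
    using inv_be_in[where C="\<lambda>p x y. \<phi> (mu (al a) (al (fst p))) (mu (be (snd p)) x) (be y)" and L=r]
    by (simp add: bilI[OF vs])
  have E6: "(\<Sum>p\<leftarrow>r. \<Sum>q\<leftarrow>r. \<phi> (al (al (fst p))) (al (fst q)) (mu (snd q) (mu (snd p) a)))
     = (\<Sum>p\<leftarrow>r. \<Sum>q\<leftarrow>r. \<phi> (al (al (fst p))) (al (al (fst q))) (mu (mu (snd q) (snd p)) (be a)))"
    using inv_al_in[where C="\<lambda>p x y. \<phi> (al (al (fst p))) (al x) (mu y (mu (snd p) a))" and L=r]
    by (simp add: bilI[OF vs] assoc)
  have E7: "(\<Sum>p\<leftarrow>r. \<Sum>q\<leftarrow>r. \<phi> (al (fst q)) (mu (snd q) (mu a (fst p))) (be (be (snd p))))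
     = (\<Sum>p\<leftarrow>r. \<Sum>q\<leftarrow>r. \<phi> (al (al (fst p))) (mu (mu (snd p) a) (fst q)) (be (snd q)))"
  proof -
    have b: "bilinear_form sc (\<lambda>x y. \<Sum>q\<leftarrow>r. \<phi> (al x) (mu y (mu a (fst q))) (be (be (snd q))))"
      by (rule bilI[OF vs]) (simp_all add: sum_list_addf sum_list_const_mult)
    have "(\<Sum>p\<leftarrow>r. \<Sum>q\<leftarrow>r. \<phi> (al (fst q)) (mu (snd q) (mu a (fst p))) (be (be (snd p))))
       = (\<Sum>p\<leftarrow>r. \<Sum>q\<leftarrow>r. \<phi> (al (fst p)) (mu (snd p) (mu a (fst q))) (be (be (snd q))))"
      by (rule sum_list_swap)
    also have "\<dots> = (\<Sum>p\<leftarrow>r. \<Sum>q\<leftarrow>r. \<phi> (al (al (fst p))) (mu (al (snd p)) (mu a (fst q))) (be (be (snd q))))"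
      using inv_al'[OF b] by simp
    also have "\<dots> = (\<Sum>p\<leftarrow>r. \<Sum>q\<leftarrow>r. \<phi> (al (al (fst p))) (mu (mu (snd p) a) (be (fst q))) (be (be (snd q))))"
      by (simp add: assoc)
    also have "\<dots> = (\<Sum>p\<leftarrow>r. \<Sum>q\<leftarrow>r. \<phi> (al (al (fst p))) (mu (mu (snd p) a) (fst q)) (be (snd q)))"
      using inv_be_in[where C="\<lambda>p x y. \<phi> (al (al (fst p))) (mu (mu (snd p) a) x) (be y)" and L=r]
      by (simp add: bilI[OF vs])
    finally show ?thesis .
  qed
  show ?thesis
    apply (simp add: Delta_r_def sum_list_concat_map sum_list_addf sum_list_negf sum_list_subtractf case_prod_unfold comp_def)
    apply (simp only: E1 E2 E3 E4 E5 E6 E7)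
    by (rule comb[OF H])
qed

end

context BH begin

abbreviation "De \<equiv> Delta_r mu al be r"

lemmas expand = Delta_r_def sum_list_concat_map sum_list_addf sum_list_negf sum_list_subtractf case_prod_unfold comp_def sum_list_const_mult

lemma De_lin: "teq2 sc (De (sc c a + b)) ([(sc c x, y). (x,y) \<leftarrow> De a] @ De b)"
  unfolding teq2_def
proof (intro allI impI)
  fix \<phi> assume b: "bilinear_form sc \<phi>"
  note bilD[OF b, simp]
  show "(\<Sum>(x, y)\<leftarrow>De (sc c a + b). \<phi> x y) = (\<Sum>(x, y)\<leftarrow>[(sc c x, y). (x,y) \<leftarrow> De a] @ De b. \<phi> x y)"
    apply (simp add: expand)
    apply (simp add: bilD_diff[OF b] sum_list_subtractf sum_list_negf sum_list_const_mult)
    done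
qed

lemma De_be: "teq2 sc [(be x, be y). (x,y) \<leftarrow> De a] (De (be a))"
  unfolding teq2_def
proof (intro allI impI)
  fix \<phi> assume b: "bilinear_form sc \<phi>"
  note bilD[OF b, simp]
  have b1: "bilinear_form sc (\<lambda>x y. \<phi> (al x) (mu y (be a)))" by (rule bilI[OF vs]) simp_all
  have b2: "bilinear_form sc (\<lambda>x y. \<phi> (mu (be a) x) (be y))" by (rule bilI[OF vs]) simp_all
  show "(\<Sum>(x, y)\<leftarrow>[(be x, be y). (x,y) \<leftarrow> De a]. \<phi> x y) = (\<Sum>(x, y)\<leftarrow>De (be a). \<phi> x y)"
    using inv_be'[OF b1] inv_be'[OF b2] by (simp add: expand)
qed

lemma De_al: "teq2 sc [(al x, al y). (x,y) \<leftarrow> De a] (De (al a))"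
  unfolding teq2_def
proof (intro allI impI)
  fix \<phi> assume b: "bilinear_form sc \<phi>"
  note bilD[OF b, simp]
  have b1: "bilinear_form sc (\<lambda>x y. \<phi> (al x) (mu y (al a)))" by (rule bilI[OF vs]) simp_all
  have b2: "bilinear_form sc (\<lambda>x y. \<phi> (mu (al a) x) (be y))" by (rule bilI[OF vs]) simp_all
  show "(\<Sum>(x, y)\<leftarrow>[(al x, al y). (x,y) \<leftarrow> De a]. \<phi> x y) = (\<Sum>(x, y)\<leftarrow>De (al a). \<phi> x y)"
    using inv_al'[OF b1] inv_al'[OF b2] by (simp add: expand)
qed

lemma compat: "teq2 sc (De (mu a b))
        ([(mu (al a) b1, be b2). (b1,b2) \<leftarrow> De b] @ [(al a1, mu a2 (be b)). (a1,a2) \<leftarrow> De a])"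
  unfolding teq2_def
proof (intro allI impI)
  fix \<phi> assume bl: "bilinear_form sc \<phi>"
  note bilD[OF bl, simp]
  have b1: "bilinear_form sc (\<lambda>x y. \<phi> (al x) (mu y (mu a b)))" by (rule bilI[OF vs]) simp_all
  have b2: "bilinear_form sc (\<lambda>x y. \<phi> (mu (mu a b) x) (be y))" by (rule bilI[OF vs]) simp_all
  have F1: "(\<Sum>q\<leftarrow>r. \<phi> (al (al (fst q))) (mu (mu (snd q) a) (be b))) = (\<Sum>q\<leftarrow>r. \<phi> (al (fst q)) (mu (snd q) (mu a b)))"
    using inv_al'[OF b1] by (simp add: assoc)
  have F2: "(\<Sum>q\<leftarrow>r. \<phi> (mu (al a) (mu b (fst q))) (be (be (snd q)))) = (\<Sum>q\<leftarrow>r. \<phi> (mu (mu a b) (fst q)) (be (snd q)))"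
    using inv_be'[OF b2] by (simp add: assoc)
  show "(\<Sum>(x, y)\<leftarrow>De (mu a b). \<phi> x y) = (\<Sum>(x, y)\<leftarrow>[(mu (al a) b1, be b2). (b1,b2) \<leftarrow> De b] @ [(al a1, mu a2 (be b)). (a1,a2) \<leftarrow> De a]. \<phi> x y)"
    by (simp add: expand F1 F2)
qed

end

theorem proposition5p5:
  fixes sc :: "'k::field \<Rightarrow> 'a::ab_group_add \<Rightarrow> 'a"
    and mu :: "'a \<Rightarrow> 'a \<Rightarrow> 'a" and al be :: "'a \<Rightarrow> 'a"
    and r :: "'a tensor2"
  assumes "bihom_assoc_algebra sc mu al be"
    and "teq2 sc [(al x, al y). (x,y) \<leftarrow> r] r"
    and "teq2 sc [(be x, be y). (x,y) \<leftarrow> r] r"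
    and "\<And>a. teq3 sc (act_left mu al be a (AYBE mu al be r)) (act_right mu al be (AYBE mu al be r) a)"
  shows "inf_bihom_bialgebra sc mu (Delta_r mu al be r) al be be al"
proof -
  interpret BH sc mu al be r
    by (rule BH.intro) (fact assms)+
  have coa: "teq3 sc [(u, v, be y). (x,y) \<leftarrow> Delta_r mu al be r a, (u,v) \<leftarrow> Delta_r mu al be r x]
                  [(al x, u, v). (x,y) \<leftarrow> Delta_r mu al be r a, (u,v) \<leftarrow> Delta_r mu al be r y]" for a
    unfolding teq3_def
  proof (intro allI impI)
    fix \<phi> :: "'a \<Rightarrow> 'a \<Rightarrow> 'a \<Rightarrow> 'k"
    assume t: "trilinear_form sc \<phi>"
    interpret T: BHT sc mu al be r \<phi>
      by (rule BHT.intro, unfold_locales, rule t)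
    show "(\<Sum>(x,y,z)\<leftarrow>[(u, v, be y). (x,y) \<leftarrow> Delta_r mu al be r a, (u,v) \<leftarrow> Delta_r mu al be r x]. \<phi> x y z) =
      (\<Sum>(x,y,z)\<leftarrow>[(al x, u, v). (x,y) \<leftarrow> Delta_r mu al be r a, (u,v) \<leftarrow> Delta_r mu al be r y]. \<phi> x y z)"
      by (rule T.coassoc)
  qed
  have lin_al: "lin sc al" and lin_be: "lin sc be" using lins by (simp_all add: lin_def)
  show ?thesis
    unfolding inf_bihom_bialgebra_def bihom_coassoc_coalgebra_def
    using assms(1) vs lin_al lin_be De_lin De_be De_al compat coa
    by simp
qed

end
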